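(* Let $\mathbb{X},\mathbb{Y}$ be real normed spaces, $\epsilon\in[0,1)$, and $T\in\mathbb{B}(\mathbb{X},\mathbb{Y})$ nonzero. Then for any $A\in\mathbb{B}(\mathbb{X},\mathbb{Y})$, $T\perp_B^{\epsilon}A$ if and only if (a) or (b) holds: (a) there exists a sequence $(x_n)$ of unit vectors in $\mathbb{X}$ such that $\|Tx_n\|\to\|T\|$, and $\lim_{n\to\infty}\|Ax_n\|$ exists and is $\le\epsilon\|A\|$; (b) there exist sequences $(x_n),(y_n)$ of unit vectors in $\mathbb{X}$ and sequences $(\epsilon_n),(\delta_n)$ of positive reals such that: (i) $\epsilon_n\to0$, $\delta_n\to0$, $\|Tx_n\|\to\|T\|$, $\|Ty_n\|\to\|T\|$; (ii) for all $n$ and all $\lambda\ge0$, $\|Tx_n+\lambda Ax_n\|^2\ge(1-\epsilon_n^2)\|Tx_n\|^2-2\epsilon\sqrt{1-\epsilon_n^2}\,\|Tx_n\|\|\lambda A\|$; (iii) for all $n$ and all $\lambda\le0$, $\|Ty_n+\lambda Ay_n\|^2\ge(1-\delta_n^2)\|Ty_n\|^2-2\epsilon\sqrt{1-\delta_n^2}\,\|Ty_n\|\|\lambda A\|$.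
   Context: $\mathbb{B}(\mathbb{X},\mathbb{Y})$ is the space of bounded linear operators from $\mathbb{X}$ to $\mathbb{Y}$ with the operator norm. For $\epsilon\in[0,1)$ and $u,v$ in a normed space, $u\perp_B^{\epsilon}v$ means $\|u+\lambda v\|^2\ge\|u\|^2-2\epsilon\|u\|\|\lambda v\|$ for all $\lambda\in\mathbb{R}$. *)

theory Defs
  imports "HOL-Analysis.Analysis"
begin

definition bj_eps_orth :: "real \<Rightarrow> 'a::real_normed_vector \<Rightarrow> 'a \<Rightarrow> bool" where
  "bj_eps_orth \<epsilon> u v \<longleftrightarrow>
     (\<forall>l::real. (norm (u + l *\<^sub>R v))\<^sup>2 \<ge> (norm u)\<^sup>2 - 2 * \<epsilon> * norm u * norm (l *\<^sub>R v))"

end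

theory Submission imports Defs begin

lemma key_pointwise:
  fixes u v :: "'b::real_normed_vector"
  assumes s0: "0 \<le> s" "s \<le> 1" and eps: "0 \<le> \<epsilon>" "\<epsilon> \<le> 1" and va: "norm v \<le> a"
    and l0: "0 < l0" and tN: "norm u \<le> N"
    and h: "s = 0 \<or> ((1-s)*norm u \<ge> l0*a \<and>
          (1-s)*norm u* \<delta> \<ge> 2*N*max 0 ((norm u - norm (u + l0 *\<^sub>R v))/l0 - \<epsilon> *a) \<and> norm v \<ge> \<delta> \<and> \<delta> > 0)"
    and l: "0 \<le> l"
  shows "(norm (u + l *\<^sub>R v))\<^sup>2 \<ge> s\<^sup>2 * (norm u)\<^sup>2 - 2 * \<epsilon> * s * norm u * (l * a)"
proof -
  define t where "t = norm u"
  define F where "F = norm (u + l *\<^sub>R v)"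
  have t0: "t \<ge> 0" "F \<ge> 0" unfolding t_def F_def by auto
  have a0: "a \<ge> 0" using va norm_ge_zero order_trans by blast
  have main: "F \<ge> s*t - \<epsilon> *l*a \<or> s*t - \<epsilon> *l*a < 0"
  proof (cases "s = 0")
    case True
    have "\<epsilon> * l * a \<ge> 0" using eps a0 l by simp
    then show ?thesis using t0 True by simp
  next
    case False
    with h have h1: "(1-s)*t \<ge> l0*a" and h2: "(1-s)*t* \<delta> \<ge> 2*N*max 0 ((t - norm (u + l0 *\<^sub>R v))/l0 - \<epsilon> *a)"
      and h3: "norm v \<ge> \<delta>" and h4: "\<delta> > 0" unfolding t_def by auto
    show ?thesis
    proof (cases "l \<le> l0")
      case True
      have Fa: "F \<ge> t - norm (l *\<^sub>R v)" unfolding F_def t_def by (rule norm_diff_ineq)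
      have "norm (l *\<^sub>R v) \<le> l * a" using l va by (simp add: mult_left_mono)
      with Fa have "F \<ge> t - l*a" by simp
      moreover have "l*a \<le> l0*a" using True a0 by (simp add: mult_right_mono)
      moreover have "(1-\<epsilon>)*(l*a) \<le> l*a" using eps l a0 by (simp add: mult_nonneg_nonneg algebra_simps)
      ultimately show ?thesis using h1 by (auto simp: algebra_simps)
    next
      case False
      define G where "G = norm (u + l0 *\<^sub>R v)"
      have eq: "u + l0 *\<^sub>R v = (1 - l0/l) *\<^sub>R u + (l0/l) *\<^sub>R (u + l *\<^sub>R v)"
        using False l0 by (simp add: algebra_simps)
      have "G \<le> (1 - l0/l) * t + (l0/l) * F"
        unfolding G_def eq t_def F_def
        by (rule order_trans[OF norm_triangle_ineq]) (use False l0 in simp)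
      hence "l*G \<le> l*((1 - l0/l) * t + (l0/l) * F)" using l by (simp add: mult_left_mono)
      moreover have "l*((1 - l0/l) * t + (l0/l) * F) = (l-l0)*t + l0*F" using l0 False by (simp add: field_simps)
      ultimately have "l*G \<le> (l-l0)*t + l0*F" by simp
      hence F1: "l0 * F \<ge> l0*t - l*(t-G)" by (simp add: algebra_simps)
      define \<eta> where "\<eta> = max 0 ((t - G)/l0 - \<epsilon> *a)"
      have "(t-G)/l0 \<le> \<eta> + \<epsilon> * a" unfolding \<eta>_def by linarith
      hence "(t-G) \<le> l0*(\<eta> + \<epsilon> *a)" using l0 by (metis pos_divide_le_eq mult.commute)
      hence "l*(t-G) \<le> l*(l0*(\<eta> + \<epsilon> *a))" using l mult_left_mono by blast
      hence "l0*F \<ge> l0*(t - l*(\<eta>+\<epsilon> *a))" using F1 by (simp add: algebra_simps)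
      hence F2: "F \<ge> t - l*(\<eta>+\<epsilon> *a)" using l0 by simp
      have h2': "(1-s)*t* \<delta> \<ge> 2*N* \<eta>" using h2 unfolding \<eta>_def G_def .
      show ?thesis
      proof (cases "l* \<eta> \<le> (1-s)*t")
        case True
        then show ?thesis using F2 by (simp add: algebra_simps)
      next
        case False
        have "\<eta> \<ge> 0" unfolding \<eta>_def by simp
        moreover have "(1-s)*t \<ge> 0" using s0 t0 by simp
        ultimately have pos: "\<eta> > 0" using False by (cases "\<eta> = 0") auto
        have "l* \<eta> * \<delta> > (1-s)*t* \<delta>" using False h4 by simp
        hence "l* \<eta> * \<delta> > 2*N* \<eta>" using h2' by linarith
        hence ld: "l* \<delta> > 2*N" using pos by (simp add: mult.commute mult.left_commute)
        have "F \<ge> norm (l *\<^sub>R v) - t" unfolding F_def t_def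
          by (metis add.commute norm_diff_ineq)
        moreover have "norm (l *\<^sub>R v) \<ge> l* \<delta>" using l h3 by (simp add: mult_left_mono)
        moreover have "s*t \<le> t" using s0 t0 by (simp add: mult_left_le_one_le)
        moreover have "t \<le> N" using tN t_def by simp
        moreover have "\<epsilon> *l*a \<ge> 0" using eps l a0 by simp
        ultimately show ?thesis using ld by linarith
      qed
    qed
  qed
  have st0: "s*t \<ge> 0" using s0 t0 by simp
  have "F\<^sup>2 \<ge> s\<^sup>2 * t\<^sup>2 - 2 * \<epsilon> * s * t * (l * a)"
  proof (cases "s*t - \<epsilon> * l * a < 0")
    case True
    have "\<epsilon> * l * a \<ge> 0" using eps l a0 by simp
    hence "s*t*(s*t - 2 * \<epsilon> * l * a) \<le> 0" using True st0 by (intro mult_nonneg_nonpos) auto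
    hence "s\<^sup>2 * t\<^sup>2 - 2 * \<epsilon> * s * t * (l * a) \<le> 0" by (simp add: power2_eq_square algebra_simps)
    then show ?thesis by (smt (verit) zero_le_power2)
  next
    case False
    with main have "F \<ge> s*t - \<epsilon> * l * a" by auto
    hence "F\<^sup>2 \<ge> (s*t - \<epsilon> * l * a)\<^sup>2" using False by (intro power_mono) auto
    moreover have "(s*t - \<epsilon> * l * a)\<^sup>2 \<ge> s\<^sup>2 * t\<^sup>2 - 2 * \<epsilon> * s * t * (l * a)"
      using zero_le_power2[of "\<epsilon> * l * a"] by (simp add: power2_eq_square algebra_simps)
    ultimately show ?thesis by linarith
  qed
  then show ?thesis unfolding F_def t_def .
qed

lemma near_norm:
  fixes S :: "'a::real_normed_vector \<Rightarrow>\<^sub>L 'b::real_normed_vector"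
  assumes ne: "\<exists>x::'a. x \<noteq> 0" and r: "r < norm S"
  shows "\<exists>x. norm x = 1 \<and> r < norm (blinfun_apply S x)"
proof (rule ccontr)
  assume H: "\<not> ?thesis"
  hence H': "\<And>x. norm x = 1 \<Longrightarrow> norm (blinfun_apply S x) \<le> r" by (meson not_le)
  obtain x0::'a where x0: "x0 \<noteq> 0" using ne by blast
  have "norm (inverse (norm x0) *\<^sub>R x0) = 1" using x0 by simp
  from H'[OF this] have r0: "0 \<le> r" using norm_ge_zero order_trans by blast
  have "norm S \<le> r"
  proof (rule norm_blinfun_bound[OF r0])
    fix x :: 'a
    show "norm (blinfun_apply S x) \<le> r * norm x"
    proof (cases "x = 0")
      case True then show ?thesis by simp
    next
      case False
      have "norm (inverse (norm x) *\<^sub>R x) = 1" using False by simp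
      from H'[OF this] have "inverse (norm x) * norm (blinfun_apply S x) \<le> r"
        by (simp add: blinfun.scaleR_right)
      then show ?thesis using False by (simp add: field_simps)
    qed
  qed
  with r show False by simp
qed

lemma sq_lemma:
  fixes M N c :: real
  assumes "0 \<le> M" "0 \<le> N" "0 \<le> c" "M \<ge> N - c"
  shows "M\<^sup>2 \<ge> N\<^sup>2 - 2 * N * c"
proof (cases "N - c \<ge> 0")
  case True
  hence "M\<^sup>2 \<ge> (N - c)\<^sup>2" using assms by (intro power_mono) auto
  moreover have "(N - c)\<^sup>2 \<ge> N\<^sup>2 - 2 * N * c" using zero_le_power2[of c]
    by (simp add: power2_eq_square algebra_simps)
  ultimately show ?thesis by linarith
next
  case False
  hence "N * (N - 2 * c) \<le> 0" using assms by (intro mult_nonneg_nonpos) auto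
  hence "N\<^sup>2 - 2 * N * c \<le> 0" by (simp add: power2_eq_square algebra_simps)
  then show ?thesis using zero_le_power2[of M] by linarith
qed

lemma back_a:
  fixes T A :: "'a::real_normed_vector \<Rightarrow>\<^sub>L 'b::real_normed_vector"
  assumes x1: "\<forall>n. norm (x n) = 1" and xT: "(\<lambda>n. norm (blinfun_apply T (x n))) \<longlonglongrightarrow> norm T"
    and xA: "(\<lambda>n. norm (blinfun_apply A (x n))) \<longlonglongrightarrow> L" and L: "L \<le> \<epsilon> * norm A" and e0: "0 \<le> \<epsilon>"
  shows "bj_eps_orth \<epsilon> T A"
  unfolding bj_eps_orth_def
proof
  fix l :: real
  have b: "norm (T + l *\<^sub>R A) \<ge> norm (blinfun_apply T (x n)) - \<bar>l\<bar> * norm (blinfun_apply A (x n))" for n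
  proof -
    have "norm (blinfun_apply (T + l *\<^sub>R A) (x n)) \<le> norm (T + l *\<^sub>R A)"
      using norm_blinfun[of "T + l *\<^sub>R A" "x n"] x1 by simp
    moreover have "blinfun_apply (T + l *\<^sub>R A) (x n) = blinfun_apply T (x n) + l *\<^sub>R blinfun_apply A (x n)"
      by (simp add: blinfun.add_left blinfun.scaleR_left)
    ultimately have c: "norm (blinfun_apply T (x n) + l *\<^sub>R blinfun_apply A (x n)) \<le> norm (T + l *\<^sub>R A)" by simp
    have "norm (blinfun_apply T (x n) + l *\<^sub>R blinfun_apply A (x n)) \<ge> norm (blinfun_apply T (x n)) - \<bar>l\<bar> * norm (blinfun_apply A (x n))"
      using norm_diff_ineq[of "blinfun_apply T (x n)" "l *\<^sub>R blinfun_apply A (x n)"] by simp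
    with c show ?thesis by linarith
  qed
  have lim: "(\<lambda>n. norm (blinfun_apply T (x n)) - \<bar>l\<bar> * norm (blinfun_apply A (x n))) \<longlonglongrightarrow> norm T - \<bar>l\<bar> * L"
    by (intro tendsto_intros xT xA)
  have "norm (T + l *\<^sub>R A) \<ge> norm T - \<bar>l\<bar> * L"
    by (rule LIMSEQ_le_const2[OF lim]) (use b in auto)
  moreover have "\<bar>l\<bar> * L \<le> \<bar>l\<bar> * (\<epsilon> * norm A)" using L by (simp add: mult_left_mono)
  ultimately have "norm (T + l *\<^sub>R A) \<ge> norm T - \<epsilon> * norm (l *\<^sub>R A)" by (simp add: mult_ac)
  from sq_lemma[OF norm_ge_zero norm_ge_zero _ this]
  show "(norm (T + l *\<^sub>R A))\<^sup>2 \<ge> (norm T)\<^sup>2 - 2 * \<epsilon> * norm T * norm (l *\<^sub>R A)"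
    using e0 by (simp add: mult_ac)
qed

lemma back_b_half:
  fixes T A :: "'a::real_normed_vector \<Rightarrow>\<^sub>L 'b::real_normed_vector"
  assumes x1: "\<forall>n. norm (x n) = 1" and xT: "(\<lambda>n. norm (blinfun_apply T (x n))) \<longlonglongrightarrow> norm T"
    and e: "e \<longlonglongrightarrow> 0"
    and H: "\<forall>n. (norm (blinfun_apply T (x n) + l *\<^sub>R blinfun_apply A (x n)))\<^sup>2
             \<ge> (1 - (e n)\<^sup>2) * (norm (blinfun_apply T (x n)))\<^sup>2
                - 2 * \<epsilon> * sqrt (1 - (e n)\<^sup>2) * norm (blinfun_apply T (x n)) * norm (l *\<^sub>R A)"
  shows "(norm (T + l *\<^sub>R A))\<^sup>2 \<ge> (norm T)\<^sup>2 - 2 * \<epsilon> * norm T * norm (l *\<^sub>R A)"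
proof -
  have b: "(norm (T + l *\<^sub>R A))\<^sup>2 \<ge> (norm (blinfun_apply T (x n) + l *\<^sub>R blinfun_apply A (x n)))\<^sup>2" for n
  proof -
    have "norm (blinfun_apply (T + l *\<^sub>R A) (x n)) \<le> norm (T + l *\<^sub>R A)"
      using norm_blinfun[of "T + l *\<^sub>R A" "x n"] x1 by simp
    moreover have "blinfun_apply (T + l *\<^sub>R A) (x n) = blinfun_apply T (x n) + l *\<^sub>R blinfun_apply A (x n)"
      by (simp add: blinfun.add_left blinfun.scaleR_left)
    ultimately show ?thesis by (intro power_mono) auto
  qed
  have lim: "(\<lambda>n. (1 - (e n)\<^sup>2) * (norm (blinfun_apply T (x n)))\<^sup>2
                - 2 * \<epsilon> * sqrt (1 - (e n)\<^sup>2) * norm (blinfun_apply T (x n)) * norm (l *\<^sub>R A))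
     \<longlonglongrightarrow> (1 - 0\<^sup>2) * (norm T)\<^sup>2 - 2 * \<epsilon> * sqrt (1 - 0\<^sup>2) * norm T * norm (l *\<^sub>R A)"
    by (intro tendsto_intros xT e)
  have "(norm (T + l *\<^sub>R A))\<^sup>2 \<ge> (1 - 0\<^sup>2) * (norm T)\<^sup>2 - 2 * \<epsilon> * sqrt (1 - 0\<^sup>2) * norm T * norm (l *\<^sub>R A)"
    by (rule LIMSEQ_le_const2[OF lim]) (use b H order_trans in blast)
  then show ?thesis by simp
qed
lemma eta_real:
  fixes N M c \<epsilon> :: real
  assumes N: "N > 0" and M0: "M \<ge> 0" and Mc: "M \<ge> N - c" and c0: "0 \<le> c" and cN: "c \<le> N"
    and e0: "0 \<le> \<epsilon>" and e1: "\<epsilon> \<le> 1" and sq: "M\<^sup>2 \<ge> N\<^sup>2 - 2 * \<epsilon> * N * c"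
  shows "N - M \<le> \<epsilon> * c + 2 * \<epsilon> * c\<^sup>2 / N"
proof (cases "M \<ge> N")
  case True
  have "\<epsilon> * c \<ge> 0" "2 * \<epsilon> * c\<^sup>2 / N \<ge> 0" using e0 c0 N by auto
  then show ?thesis using True by linarith
next
  case False
  define D where "D = N - M"
  have D0: "D > 0" "D \<le> c" using False Mc unfolding D_def by auto
  have eqD: "N\<^sup>2 - M\<^sup>2 = D * (2 * N - D)" unfolding D_def by (simp add: power2_eq_square algebra_simps)
  have key: "D * (2 * N - D) \<le> 2 * \<epsilon> * N * c" using sq eqD by linarith
  have "D * N \<le> D * (2 * N - D)" using D0 cN by (intro mult_left_mono) auto
  hence "D * N \<le> (2 * \<epsilon> * c) * N" using key by (simp add: mult_ac)
  hence D2: "D \<le> 2 * \<epsilon> * c" using N by simp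
  have "D\<^sup>2 \<le> (2 * \<epsilon> * c)\<^sup>2" using D0 D2 by (intro power_mono) auto
  moreover have "\<epsilon>\<^sup>2 \<le> \<epsilon>" using e0 e1 by (simp add: power2_eq_square mult_left_le_one_le)
  hence "(2 * \<epsilon> * c)\<^sup>2 \<le> 4 * \<epsilon> * c\<^sup>2"
    using zero_le_power2[of c] mult_right_mono[of "\<epsilon>\<^sup>2" \<epsilon> "c\<^sup>2"] by (simp add: power_mult_distrib)
  ultimately have D3: "D\<^sup>2 \<le> 4 * \<epsilon> * c\<^sup>2" by linarith
  have "2 * D * N - D\<^sup>2 \<le> 2 * \<epsilon> * N * c" using key by (simp add: power2_eq_square algebra_simps)
  hence "D * N \<le> \<epsilon> * c * N + 2 * \<epsilon> * c\<^sup>2" using D3 by (simp add: algebra_simps)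
  hence "D \<le> (\<epsilon> * c * N + 2 * \<epsilon> * c\<^sup>2) / N" using N by (simp add: field_simps)
  also have "\<dots> = \<epsilon> * c + 2 * \<epsilon> * c\<^sup>2 / N" using N by (simp add: field_simps)
  finally show ?thesis unfolding D_def .
qed
lemma construct:
  fixes T A :: "'a::real_normed_vector \<Rightarrow>\<^sub>L 'b::real_normed_vector"
  assumes ne: "\<exists>x::'a. x \<noteq> 0" and Npos: "0 < norm T" and e0: "0 \<le> \<epsilon>" and e1: "\<epsilon> < 1"
    and orth: "\<forall>l\<ge>0. (norm (T + l *\<^sub>R A))\<^sup>2 \<ge> (norm T)\<^sup>2 - 2 * \<epsilon> * norm T * (l * norm A)"
    and r: "0 < r"
    and rB: "\<forall>z. norm z = 1 \<longrightarrow> norm (blinfun_apply T z) > norm T - r \<longrightarrow> norm (blinfun_apply A z) \<ge> r"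
  shows "\<exists>(x :: nat \<Rightarrow> 'a) (e :: nat \<Rightarrow> real). (\<forall>n. norm (x n) = 1) \<and> (\<forall>n. 0 < e n) \<and> e \<longlonglongrightarrow> 0 \<and>
     (\<lambda>n. norm (blinfun_apply T (x n))) \<longlonglongrightarrow> norm T \<and>
     (\<forall>n. \<forall>l::real. l \<ge> 0 \<longrightarrow>
           (norm (blinfun_apply T (x n) + l *\<^sub>R blinfun_apply A (x n)))\<^sup>2
             \<ge> (1 - (e n)\<^sup>2) * (norm (blinfun_apply T (x n)))\<^sup>2
                - 2 * \<epsilon> * sqrt (1 - (e n)\<^sup>2) * norm (blinfun_apply T (x n)) * norm (l *\<^sub>R A))"
proof -
  define N where "N = norm T"
  define a where "a = norm A"
  define lam where "lam n = inverse (real (Suc n))" for n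
  have lam0: "lam n > 0" for n unfolding lam_def by simp
  have lamlim: "lam \<longlonglongrightarrow> 0" unfolding lam_def by (rule LIMSEQ_inverse_real_of_nat)
  have a0: "a \<ge> 0" unfolding a_def by simp
  have N0: "N > 0" unfolding N_def using Npos .
  have "\<forall>n. \<exists>z. norm z = 1 \<and> norm (T + lam n *\<^sub>R A) - (lam n)\<^sup>2 < norm (blinfun_apply (T + lam n *\<^sub>R A) z)"
  proof
    fix n
    have "norm (T + lam n *\<^sub>R A) - (lam n)\<^sup>2 < norm (T + lam n *\<^sub>R A)" using lam0[of n] by simp
    from near_norm[OF ne this] show "\<exists>z. norm z = 1 \<and> norm (T + lam n *\<^sub>R A) - (lam n)\<^sup>2 < norm (blinfun_apply (T + lam n *\<^sub>R A) z)" .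
  qed
  from choice[OF this] obtain x where x: "\<And>n. norm (x n) = 1"
    "\<And>n. norm (T + lam n *\<^sub>R A) - (lam n)\<^sup>2 < norm (blinfun_apply (T + lam n *\<^sub>R A) (x n))" by blast
  define t where "t n = norm (blinfun_apply T (x n))" for n
  define G where "G n = norm (blinfun_apply T (x n) + lam n *\<^sub>R blinfun_apply A (x n))" for n
  define M where "M n = norm (T + lam n *\<^sub>R A)" for n
  have appl: "blinfun_apply (T + lam n *\<^sub>R A) (x n) = blinfun_apply T (x n) + lam n *\<^sub>R blinfun_apply A (x n)" for n
    by (simp add: blinfun.add_left blinfun.scaleR_left)
  have tle: "t n \<le> N" for n unfolding t_def N_def using norm_blinfun[of T "x n"] x(1)[of n] by simp
  have t0: "t n \<ge> 0" for n unfolding t_def by simp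
  have Ale: "norm (blinfun_apply A (x n)) \<le> a" for n unfolding a_def using norm_blinfun[of A "x n"] x(1)[of n] by simp
  have GM: "G n > M n - (lam n)\<^sup>2" for n using x(2)[of n] appl[of n] unfolding G_def M_def by simp
  have Mlow: "M n \<ge> N - lam n * a" for n
    using norm_diff_ineq[of T "lam n *\<^sub>R A"] lam0[of n] unfolding M_def N_def a_def by simp
  have M0: "M n \<ge> 0" for n unfolding M_def by simp
  have Msq: "(M n)\<^sup>2 \<ge> N\<^sup>2 - 2 * \<epsilon> * N * (lam n * a)" for n
    using orth lam0[of n] unfolding M_def N_def a_def by (simp add: less_imp_le)
  have Gt: "G n \<le> t n + lam n * a" for n
  proof -
    have "G n \<le> t n + norm (lam n *\<^sub>R blinfun_apply A (x n))" unfolding G_def t_def by (rule norm_triangle_ineq)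
    also have "norm (lam n *\<^sub>R blinfun_apply A (x n)) \<le> lam n * a" using lam0[of n] Ale[of n] by (simp add: mult_left_mono)
    finally show ?thesis by simp
  qed
  have tlow: "t n \<ge> N - 2 * lam n * a - (lam n)\<^sup>2" for n using Gt[of n] GM[of n] Mlow[of n] by simp
  have tlim: "t \<longlonglongrightarrow> N"
  proof (rule tendsto_sandwich[of "\<lambda>n. N - 2 * lam n * a - (lam n)\<^sup>2" _ _ "\<lambda>n. N"])
    show "\<forall>\<^sub>F n in sequentially. N - 2 * lam n * a - (lam n)\<^sup>2 \<le> t n" using tlow by simp
    show "\<forall>\<^sub>F n in sequentially. t n \<le> N" using tle by simp
    have "(\<lambda>n. N - 2 * lam n * a - (lam n)\<^sup>2) \<longlonglongrightarrow> N - 2 * 0 * a - 0\<^sup>2" by (intro tendsto_intros lamlim)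
    then show "(\<lambda>n. N - 2 * lam n * a - (lam n)\<^sup>2) \<longlonglongrightarrow> N" by simp
  qed simp
  define \<eta> where "\<eta> n = max 0 ((t n - G n) / lam n - \<epsilon> * a)" for n
  have \<eta>0: "\<eta> n \<ge> 0" for n unfolding \<eta>_def by simp
  have \<eta>ub: "\<eta> n \<le> lam n * (1 + 2 * \<epsilon> * a\<^sup>2 / N)" if cN: "lam n * a \<le> N" for n
  proof -
    have er: "N - M n \<le> \<epsilon> * (lam n * a) + 2 * \<epsilon> * (lam n * a)\<^sup>2 / N"
      by (rule eta_real[OF N0 M0 Mlow[of n] _ cN e0 _ Msq]) (use lam0[of n] a0 e1 in auto)
    have "t n - G n \<le> \<epsilon> * (lam n * a) + 2 * \<epsilon> * (lam n * a)\<^sup>2 / N + (lam n)\<^sup>2"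
      using er tle[of n] GM[of n] by linarith
    also have "\<dots> = lam n * (\<epsilon> * a + lam n * (1 + 2 * \<epsilon> * a\<^sup>2 / N))"
      by (simp add: power2_eq_square field_simps)
    finally have "(t n - G n) / lam n \<le> \<epsilon> * a + lam n * (1 + 2 * \<epsilon> * a\<^sup>2 / N)"
      using lam0[of n] by (simp add: divide_le_eq mult.commute)
    moreover have "lam n * (1 + 2 * \<epsilon> * a\<^sup>2 / N) \<ge> 0" using lam0[of n] e0 N0 by simp
    ultimately show ?thesis unfolding \<eta>_def by simp
  qed
  have evc: "\<forall>\<^sub>F n in sequentially. lam n * a \<le> N"
  proof -
    have "(\<lambda>n. lam n * a) \<longlonglongrightarrow> 0 * a" by (intro tendsto_intros lamlim)
    hence "\<forall>\<^sub>F n in sequentially. lam n * a < N" using N0 by (simp add: order_tendstoD(2))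
    then show ?thesis by (rule eventually_mono) simp
  qed
  have \<eta>lim: "\<eta> \<longlonglongrightarrow> 0"
  proof (rule tendsto_sandwich[of "\<lambda>n. 0" _ _ "\<lambda>n. lam n * (1 + 2 * \<epsilon> * a\<^sup>2 / N)"])
    show "\<forall>\<^sub>F n in sequentially. 0 \<le> \<eta> n" using \<eta>0 by simp
    show "\<forall>\<^sub>F n in sequentially. \<eta> n \<le> lam n * (1 + 2 * \<epsilon> * a\<^sup>2 / N)"
      using evc by (rule eventually_mono) (rule \<eta>ub)
    have "(\<lambda>n. lam n * (1 + 2 * \<epsilon> * a\<^sup>2 / N)) \<longlonglongrightarrow> 0 * (1 + 2 * \<epsilon> * a\<^sup>2 / N)" by (intro tendsto_intros lamlim)
    then show "(\<lambda>n. lam n * (1 + 2 * \<epsilon> * a\<^sup>2 / N)) \<longlonglongrightarrow> 0" by simp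
  qed simp
  define P where "P n = (t n > max (N - r) (N / 2))" for n
  have evP: "\<forall>\<^sub>F n in sequentially. P n"
  proof -
    have "max (N - r) (N / 2) < N" using r N0 by simp
    from order_tendstoD(1)[OF tlim this] show ?thesis unfolding P_def .
  qed
  define K where "K n = (if P n then lam n * a / t n + 2 * N * \<eta> n / (r * t n) + lam n else 1)" for n
  have Klim: "K \<longlonglongrightarrow> 0"
  proof -
    have "(\<lambda>n. lam n * a / t n + 2 * N * \<eta> n / (r * t n) + lam n) \<longlonglongrightarrow> 0 * a / N + 2 * N * 0 / (r * N) + 0"
      using N0 r by (intro tendsto_intros lamlim tlim \<eta>lim) auto
    hence "(\<lambda>n. lam n * a / t n + 2 * N * \<eta> n / (r * t n) + lam n) \<longlonglongrightarrow> 0" by simp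
    moreover have "\<forall>\<^sub>F n in sequentially. lam n * a / t n + 2 * N * \<eta> n / (r * t n) + lam n = K n"
      using evP by (rule eventually_mono) (simp add: K_def)
    ultimately show ?thesis by (rule Lim_transform_eventually)
  qed
  have Kpos: "K n > 0" for n
  proof (cases "P n")
    case True
    hence tp: "t n > 0" using N0 unfolding P_def by simp
    have "lam n * a / t n \<ge> 0" using lam0[of n] a0 tp by simp
    moreover have "2 * N * \<eta> n / (r * t n) \<ge> 0" using N0 \<eta>0[of n] r tp by simp
    ultimately show ?thesis using True lam0[of n] unfolding K_def by simp
  next
    case False then show ?thesis unfolding K_def by simp
  qed
  define s where "s n = max 0 (1 - K n)" for n
  define e where "e n = sqrt (1 - (s n)\<^sup>2)" for n
  have s0: "0 \<le> s n" "s n < 1" for n unfolding s_def using Kpos[of n] by auto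
  have s2: "(s n)\<^sup>2 < 1" for n using s0[of n] by (simp add: power_less_one_iff abs_square_less_1)
  have epos: "e n > 0" for n unfolding e_def using s2[of n] by simp
  have slim: "s \<longlonglongrightarrow> 1"
  proof -
    have "s \<longlonglongrightarrow> max 0 (1 - 0)" unfolding s_def[abs_def] by (intro tendsto_intros Klim)
    then show ?thesis by simp
  qed
  have elim: "e \<longlonglongrightarrow> 0"
  proof -
    have "e \<longlonglongrightarrow> sqrt (1 - 1\<^sup>2)" unfolding e_def[abs_def] by (intro tendsto_intros slim)
    then show ?thesis by simp
  qed
  have e2: "1 - (e n)\<^sup>2 = (s n)\<^sup>2" for n unfolding e_def using s2[of n] by simp
  have se: "sqrt (1 - (e n)\<^sup>2) = s n" for n using e2[of n] s0[of n] by simp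
  have ineq: "(norm (blinfun_apply T (x n) + l *\<^sub>R blinfun_apply A (x n)))\<^sup>2
             \<ge> (1 - (e n)\<^sup>2) * (norm (blinfun_apply T (x n)))\<^sup>2
                - 2 * \<epsilon> * sqrt (1 - (e n)\<^sup>2) * norm (blinfun_apply T (x n)) * norm (l *\<^sub>R A)" if l: "l \<ge> 0" for n l
  proof -
    have h: "s n = 0 \<or> ((1 - s n) * norm (blinfun_apply T (x n)) \<ge> lam n * a \<and>
          (1 - s n) * norm (blinfun_apply T (x n)) * r \<ge> 2 * N * max 0 ((norm (blinfun_apply T (x n)) - norm (blinfun_apply T (x n) + lam n *\<^sub>R blinfun_apply A (x n))) / lam n - \<epsilon> * a)
          \<and> norm (blinfun_apply A (x n)) \<ge> r \<and> r > 0)"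
    proof (cases "s n = 0")
      case False
      hence Kl: "K n < 1" and sK: "s n = 1 - K n" unfolding s_def by auto
      hence Pn: "P n" unfolding K_def by (metis less_irrefl)
      hence tp: "t n > 0" and tr: "t n > N - r" using N0 unfolding P_def by auto
      have Kt: "K n * t n = lam n * a + 2 * N * \<eta> n / r + lam n * t n"
        using Pn tp r unfolding K_def by (simp add: field_simps)
      have "2 * N * \<eta> n / r \<ge> 0" using N0 \<eta>0[of n] r by simp
      moreover have "lam n * t n \<ge> 0" using lam0[of n] tp by simp
      ultimately have c1: "K n * t n \<ge> lam n * a" using Kt by linarith
      have "K n * t n * r = lam n * a * r + 2 * N * \<eta> n + lam n * t n * r"
        using Kt r by (simp add: field_simps)
      moreover have "lam n * a * r \<ge> 0" "lam n * t n * r \<ge> 0" using lam0[of n] a0 tp r by auto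
      ultimately have c2: "K n * t n * r \<ge> 2 * N * \<eta> n" by linarith
      have c3: "norm (blinfun_apply A (x n)) \<ge> r" using rB x(1)[of n] tr unfolding t_def N_def by blast
      show ?thesis using c1 c2 c3 r sK unfolding t_def \<eta>_def G_def by simp
    qed simp
    have kp: "(s n)\<^sup>2 * (norm (blinfun_apply T (x n)))\<^sup>2 - 2 * \<epsilon> * s n * norm (blinfun_apply T (x n)) * (l * a)
       \<le> (norm (blinfun_apply T (x n) + l *\<^sub>R blinfun_apply A (x n)))\<^sup>2"
      by (rule key_pointwise[OF s0(1) less_imp_le[OF s0(2)] e0 less_imp_le[OF e1] Ale lam0 _ h l])
        (use tle[of n] in \<open>simp add: t_def\<close>)
    have "norm (l *\<^sub>R A) = l * a" using l unfolding a_def by simp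
    then show ?thesis using kp e2[of n] se[of n] by simp
  qed
  show ?thesis
    apply (rule exI[of _ x], rule exI[of _ e])
    using x(1) epos elim tlim ineq unfolding t_def N_def by blast
qed
theorem mainTheorem8:
  fixes T A :: "'a::real_normed_vector \<Rightarrow>\<^sub>L 'b::real_normed_vector"
    and \<epsilon> :: real
  assumes "0 \<le> \<epsilon>" and "\<epsilon> < 1" and "T \<noteq> 0"
  shows "bj_eps_orth \<epsilon> T A \<longleftrightarrow>
    ((\<exists>x :: nat \<Rightarrow> 'a.
        (\<forall>n. norm (x n) = 1) \<and>
        (\<lambda>n. norm (blinfun_apply T (x n))) \<longlonglongrightarrow> norm T \<and>
        convergent (\<lambda>n. norm (blinfun_apply A (x n))) \<and>
        lim (\<lambda>n. norm (blinfun_apply A (x n))) \<le> \<epsilon> * norm A)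
     \<or>
     (\<exists>(x :: nat \<Rightarrow> 'a) (y :: nat \<Rightarrow> 'a) (e :: nat \<Rightarrow> real) (d :: nat \<Rightarrow> real).
        (\<forall>n. norm (x n) = 1) \<and> (\<forall>n. norm (y n) = 1) \<and>
        (\<forall>n. 0 < e n) \<and> (\<forall>n. 0 < d n) \<and>
        e \<longlonglongrightarrow> 0 \<and> d \<longlonglongrightarrow> 0 \<and>
        (\<lambda>n. norm (blinfun_apply T (x n))) \<longlonglongrightarrow> norm T \<and>
        (\<lambda>n. norm (blinfun_apply T (y n))) \<longlonglongrightarrow> norm T \<and>
        (\<forall>n. \<forall>l::real. l \<ge> 0 \<longrightarrow>
           (norm (blinfun_apply T (x n) + l *\<^sub>R blinfun_apply A (x n)))\<^sup>2
             \<ge> (1 - (e n)\<^sup>2) * (norm (blinfun_apply T (x n)))\<^sup>2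
                - 2 * \<epsilon> * sqrt (1 - (e n)\<^sup>2) * norm (blinfun_apply T (x n)) * norm (l *\<^sub>R A)) \<and>
        (\<forall>n. \<forall>l::real. l \<le> 0 \<longrightarrow>
           (norm (blinfun_apply T (y n) + l *\<^sub>R blinfun_apply A (y n)))\<^sup>2
             \<ge> (1 - (d n)\<^sup>2) * (norm (blinfun_apply T (y n)))\<^sup>2
                - 2 * \<epsilon> * sqrt (1 - (d n)\<^sup>2) * norm (blinfun_apply T (y n)) * norm (l *\<^sub>R A))))" (is "_ \<longleftrightarrow> (?AA \<or> ?B)")
proof -
  have ne: "\<exists>x::'a. x \<noteq> 0"
  proof (rule ccontr)
    assume "\<not> (\<exists>x::'a. x \<noteq> 0)"
    hence "\<And>x::'a. x = 0" by blast
    hence "T = 0" by (intro blinfun_eqI) (metis blinfun.zero_right zero_blinfun.rep_eq)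
    with assms(3) show False by simp
  qed
  have Npos: "0 < norm T" using assms(3) by simp
  show ?thesis
  proof
    assume O: "bj_eps_orth \<epsilon> T A"
    have orthA: "\<forall>l\<ge>0. (norm (T + l *\<^sub>R A))\<^sup>2 \<ge> (norm T)\<^sup>2 - 2 * \<epsilon> * norm T * (l * norm A)"
    proof (intro allI impI)
      fix l :: real assume l: "l \<ge> 0"
      from O have "(norm (T + l *\<^sub>R A))\<^sup>2 \<ge> (norm T)\<^sup>2 - 2 * \<epsilon> * norm T * norm (l *\<^sub>R A)"
        unfolding bj_eps_orth_def by blast
      then show "(norm (T + l *\<^sub>R A))\<^sup>2 \<ge> (norm T)\<^sup>2 - 2 * \<epsilon> * norm T * (l * norm A)" using l by simp
    qed
    have orthmA: "\<forall>l\<ge>0. (norm (T + l *\<^sub>R (-A)))\<^sup>2 \<ge> (norm T)\<^sup>2 - 2 * \<epsilon> * norm T * (l * norm (-A))"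
    proof (intro allI impI)
      fix l :: real assume l: "l \<ge> 0"
      from O have "(norm (T + (-l) *\<^sub>R A))\<^sup>2 \<ge> (norm T)\<^sup>2 - 2 * \<epsilon> * norm T * norm ((-l) *\<^sub>R A)"
        unfolding bj_eps_orth_def by blast
      then show "(norm (T + l *\<^sub>R (-A)))\<^sup>2 \<ge> (norm T)\<^sup>2 - 2 * \<epsilon> * norm T * (l * norm (-A))" using l by simp
    qed
    show "?AA \<or> ?B"
    proof (cases "\<forall>\<rho>>0. \<exists>z. norm z = 1 \<and> norm (blinfun_apply T z) > norm T - \<rho> \<and> norm (blinfun_apply A z) < \<rho>")
      case True
      hence "\<forall>n. \<exists>z. norm z = 1 \<and> norm (blinfun_apply T z) > norm T - inverse (real (Suc n)) \<and> norm (blinfun_apply A z) < inverse (real (Suc n))"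
        by simp
      from choice[OF this] obtain z where z: "\<And>n. norm (z n) = 1"
        "\<And>n. norm (blinfun_apply T (z n)) > norm T - inverse (real (Suc n))"
        "\<And>n. norm (blinfun_apply A (z n)) < inverse (real (Suc n))" by blast
      have il: "(\<lambda>n. inverse (real (Suc n))) \<longlonglongrightarrow> 0" by (rule LIMSEQ_inverse_real_of_nat)
      have Tl: "(\<lambda>n. norm (blinfun_apply T (z n))) \<longlonglongrightarrow> norm T"
      proof (rule tendsto_sandwich[of "\<lambda>n. norm T - inverse (real (Suc n))" _ _ "\<lambda>n. norm T"])
        show "\<forall>\<^sub>F n in sequentially. norm T - inverse (real (Suc n)) \<le> norm (blinfun_apply T (z n))"
          using z(2) by (simp add: less_imp_le)
        show "\<forall>\<^sub>F n in sequentially. norm (blinfun_apply T (z n)) \<le> norm T"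
        proof (rule always_eventually, rule allI)
          fix n show "norm (blinfun_apply T (z n)) \<le> norm T" using norm_blinfun[of T "z n"] z(1)[of n] by simp
        qed
        have "(\<lambda>n. norm T - inverse (real (Suc n))) \<longlonglongrightarrow> norm T - 0" by (intro tendsto_intros il)
        then show "(\<lambda>n. norm T - inverse (real (Suc n))) \<longlonglongrightarrow> norm T" by simp
      qed simp
      have Al: "(\<lambda>n. norm (blinfun_apply A (z n))) \<longlonglongrightarrow> 0"
        by (rule tendsto_sandwich[of "\<lambda>n. 0" _ _ "\<lambda>n. inverse (real (Suc n))"])
          (use z(3) il in \<open>auto simp: less_imp_le\<close>)
      have "convergent (\<lambda>n. norm (blinfun_apply A (z n)))" using Al by (rule convergentI)
      moreover have "lim (\<lambda>n. norm (blinfun_apply A (z n))) = 0" using Al by (rule limI)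
      moreover have "0 \<le> \<epsilon> * norm A" using assms(1) by simp
      ultimately have "?AA" using z(1) Tl by (intro exI[of _ z]) auto
      then show ?thesis by blast
    next
      case False
      then obtain r where r: "r > 0" and
        rB: "\<forall>z. norm z = 1 \<longrightarrow> norm (blinfun_apply T z) > norm T - r \<longrightarrow> norm (blinfun_apply A z) \<ge> r"
      proof -
        from False obtain \<rho> where rp: "\<rho> > 0" and nz: "\<not> (\<exists>z. norm z = 1 \<and> norm (blinfun_apply T z) > norm T - \<rho> \<and> norm (blinfun_apply A z) < \<rho>)"
          by blast
        have H: "\<forall>z. norm z = 1 \<longrightarrow> norm (blinfun_apply T z) > norm T - \<rho> \<longrightarrow> norm (blinfun_apply A z) \<ge> \<rho>"
        proof (intro allI impI)
          fix z :: 'a assume "norm z = 1" "norm (blinfun_apply T z) > norm T - \<rho>"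
          then show "norm (blinfun_apply A z) \<ge> \<rho>" using nz by (meson not_le)
        qed
        show ?thesis using that[OF rp H] .
      qed
      have rB': "\<forall>z. norm z = 1 \<longrightarrow> norm (blinfun_apply T z) > norm T - r \<longrightarrow> norm (blinfun_apply (-A) z) \<ge> r"
        using rB by (simp add: uminus_blinfun.rep_eq)
      obtain x e where X: "(\<forall>n. norm (x n) = 1)" "(\<forall>n. 0 < e n)" "e \<longlonglongrightarrow> 0"
        "(\<lambda>n. norm (blinfun_apply T (x n))) \<longlonglongrightarrow> norm T"
        "(\<forall>n. \<forall>l::real. l \<ge> 0 \<longrightarrow>
           (norm (blinfun_apply T (x n) + l *\<^sub>R blinfun_apply A (x n)))\<^sup>2
             \<ge> (1 - (e n)\<^sup>2) * (norm (blinfun_apply T (x n)))\<^sup>2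
                - 2 * \<epsilon> * sqrt (1 - (e n)\<^sup>2) * norm (blinfun_apply T (x n)) * norm (l *\<^sub>R A))"
        using construct[OF ne Npos assms(1,2) orthA r rB] by blast
      obtain y d where Y: "(\<forall>n. norm (y n) = 1)" "(\<forall>n. 0 < d n)" "d \<longlonglongrightarrow> 0"
        "(\<lambda>n. norm (blinfun_apply T (y n))) \<longlonglongrightarrow> norm T"
        "(\<forall>n. \<forall>l::real. l \<ge> 0 \<longrightarrow>
           (norm (blinfun_apply T (y n) + l *\<^sub>R blinfun_apply (-A) (y n)))\<^sup>2
             \<ge> (1 - (d n)\<^sup>2) * (norm (blinfun_apply T (y n)))\<^sup>2
                - 2 * \<epsilon> * sqrt (1 - (d n)\<^sup>2) * norm (blinfun_apply T (y n)) * norm (l *\<^sub>R (-A)))"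
        using construct[OF ne Npos assms(1,2) orthmA r rB'] by blast
      have Y5: "\<forall>n. \<forall>l::real. l \<le> 0 \<longrightarrow>
           (norm (blinfun_apply T (y n) + l *\<^sub>R blinfun_apply A (y n)))\<^sup>2
             \<ge> (1 - (d n)\<^sup>2) * (norm (blinfun_apply T (y n)))\<^sup>2
                - 2 * \<epsilon> * sqrt (1 - (d n)\<^sup>2) * norm (blinfun_apply T (y n)) * norm (l *\<^sub>R A)"
      proof (intro allI impI)
        fix n and l :: real assume l: "l \<le> 0"
        from Y(5)[rule_format, of "-l" n] have "(norm (blinfun_apply T (y n) + (-l) *\<^sub>R blinfun_apply (-A) (y n)))\<^sup>2
             \<ge> (1 - (d n)\<^sup>2) * (norm (blinfun_apply T (y n)))\<^sup>2
                - 2 * \<epsilon> * sqrt (1 - (d n)\<^sup>2) * norm (blinfun_apply T (y n)) * norm ((-l) *\<^sub>R (-A))"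
          using l by simp
        then show "(norm (blinfun_apply T (y n) + l *\<^sub>R blinfun_apply A (y n)))\<^sup>2
             \<ge> (1 - (d n)\<^sup>2) * (norm (blinfun_apply T (y n)))\<^sup>2
                - 2 * \<epsilon> * sqrt (1 - (d n)\<^sup>2) * norm (blinfun_apply T (y n)) * norm (l *\<^sub>R A)"
          by (simp add: uminus_blinfun.rep_eq)
      qed
      have "?B" using X Y(1-4) Y5 by blast
      then show ?thesis by blast
    qed
  next
    assume D: "?AA \<or> ?B"
    then show "bj_eps_orth \<epsilon> T A"
    proof
      assume "\<exists>x :: nat \<Rightarrow> 'a.
        (\<forall>n. norm (x n) = 1) \<and>
        (\<lambda>n. norm (blinfun_apply T (x n))) \<longlonglongrightarrow> norm T \<and>
        convergent (\<lambda>n. norm (blinfun_apply A (x n))) \<and>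
        lim (\<lambda>n. norm (blinfun_apply A (x n))) \<le> \<epsilon> * norm A"
      then obtain x where x: "\<forall>n. norm (x n) = 1" "(\<lambda>n. norm (blinfun_apply T (x n))) \<longlonglongrightarrow> norm T"
        "convergent (\<lambda>n. norm (blinfun_apply A (x n)))" "lim (\<lambda>n. norm (blinfun_apply A (x n))) \<le> \<epsilon> * norm A"
        by blast
      from x(3) have "(\<lambda>n. norm (blinfun_apply A (x n))) \<longlonglongrightarrow> lim (\<lambda>n. norm (blinfun_apply A (x n)))"
        by (simp add: convergent_LIMSEQ_iff)
      from back_a[OF x(1,2) this x(4) assms(1)] show ?thesis .
    next
      assume B: ?B
      then obtain x y e d where B': "(\<forall>n. norm (x n) = 1)" "(\<forall>n. norm (y n) = 1)"
        "e \<longlonglongrightarrow> 0" "d \<longlonglongrightarrow> 0"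
        "(\<lambda>n. norm (blinfun_apply T (x n))) \<longlonglongrightarrow> norm T"
        "(\<lambda>n. norm (blinfun_apply T (y n))) \<longlonglongrightarrow> norm T"
        "(\<forall>n. \<forall>l::real. l \<ge> 0 \<longrightarrow>
           (norm (blinfun_apply T (x n) + l *\<^sub>R blinfun_apply A (x n)))\<^sup>2
             \<ge> (1 - (e n)\<^sup>2) * (norm (blinfun_apply T (x n)))\<^sup>2
                - 2 * \<epsilon> * sqrt (1 - (e n)\<^sup>2) * norm (blinfun_apply T (x n)) * norm (l *\<^sub>R A))"
        "(\<forall>n. \<forall>l::real. l \<le> 0 \<longrightarrow>
           (norm (blinfun_apply T (y n) + l *\<^sub>R blinfun_apply A (y n)))\<^sup>2
             \<ge> (1 - (d n)\<^sup>2) * (norm (blinfun_apply T (y n)))\<^sup>2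
                - 2 * \<epsilon> * sqrt (1 - (d n)\<^sup>2) * norm (blinfun_apply T (y n)) * norm (l *\<^sub>R A))"
        by blast
      show ?thesis unfolding bj_eps_orth_def
      proof
        fix l :: real
        show "(norm (T + l *\<^sub>R A))\<^sup>2 \<ge> (norm T)\<^sup>2 - 2 * \<epsilon> * norm T * norm (l *\<^sub>R A)"
        proof (cases "l \<ge> 0")
          case True
          show ?thesis by (rule back_b_half[OF B'(1,5,3)]) (use B'(7) True in blast)
        next
          case False
          show ?thesis by (rule back_b_half[OF B'(2,6,4)]) (use B'(8) False in auto)
        qed
      qed
    qed
  qed
qed

end
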